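(* Let $d\ge2$. There is a constant $C_d>0$ depending only on $d$ such that for all finite sets $X,Y\subset\mathbb{Z}^d$, $$\#(X\setminus Y)\le|\zeta(X)\setminus\zeta(Y)|+C_dP(Y),\qquad\text{and hence}\qquad \#(X\,\Delta\,Y)\le|\zeta(X)\,\Delta\,\zeta(Y)|+C_d\big(P(X)+P(Y)\big).$$
   Context: For $X\subset\mathbb{Z}^d$ and $p\in X$, $\mathrm{val}(p)=\#\{q\in\mathbb{Z}^d\setminus X:|p-q|=1\}$ and $P(X)=\sum_{p\in X}\mathrm{val}(p)$. Kuhn decomposition: for a permutation $\pi$ of $\{1,\dots,d\}$, $T_\pi=\{x\in\mathbb{R}^d:0\le x_{\pi(d)}\le\dots\le x_{\pi(1)}\le1\}$, $\mathcal{T}=\{z+T_\pi:z\in\mathbb{Z}^d,\pi\}$, $\mathcal T(i)=\{T\in\mathcal T:i\in T\}$, and $\zeta(X)=\bigcup_{i\in X}\bigcup_{T\in\mathcal T(i)}T$. $|\cdot|$ is Lebesgue measure, $\#$ cardinality, $\Delta$ symmetric difference. *)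

theory Defs
  imports "HOL-Analysis.Analysis"
begin

text \<open>Points of Z^d are vectors int^'n; d = CARD('n). Embedding into R^d.\<close>
definition of_intvec :: "int^'n \<Rightarrow> real^'n" where
  "of_intvec z = (\<chi> i. real_of_int (z $ i))"

definition lattice_val :: "(int^'n) set \<Rightarrow> int^'n \<Rightarrow> nat" where
  "lattice_val X p = card {q. q \<notin> X \<and> norm (of_intvec p - of_intvec q) = 1}"

definition lattice_perimeter :: "(int^'n) set \<Rightarrow> nat" where
  "lattice_perimeter X = (\<Sum>p\<in>X. lattice_val X p)"

text \<open>Kuhn simplex for a permutation, encoded as a bijection sigma from {0..<d} onto the
  index type: sigma i plays the role of pi(i+1). T = {x. 0 <= x_(pi d) <= ... <= x_(pi 1) <= 1}.\<close>
definition kuhn_simplex :: "(nat \<Rightarrow> 'n::finite) \<Rightarrow> (real^'n) set" where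
  "kuhn_simplex \<sigma> = {x. 0 \<le> x $ (\<sigma> (CARD('n) - 1)) \<and> x $ (\<sigma> 0) \<le> 1 \<and>
      (\<forall>i. Suc i < CARD('n) \<longrightarrow> x $ (\<sigma> (Suc i)) \<le> x $ (\<sigma> i))}"

definition kuhn_tiles :: "(real^'n::finite) set set" where
  "kuhn_tiles = {(\<lambda>x. of_intvec z + x) ` kuhn_simplex \<sigma> | z \<sigma>.
      bij_betw \<sigma> {..<CARD('n)} (UNIV :: 'n set)}"

definition kuhn_tiles_at :: "int^'n::finite \<Rightarrow> (real^'n) set set" where
  "kuhn_tiles_at i = {T \<in> kuhn_tiles. of_intvec i \<in> T}"

definition zeta :: "(int^'n::finite) set \<Rightarrow> (real^'n) set" where
  "zeta X = (\<Union>i\<in>X. \<Union>(kuhn_tiles_at i))"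

end

theory Submission
  imports Defs
begin

lemma of_intvec_nth[simp]: "of_intvec z $ i = real_of_int (z $ i)"
  by (simp add: of_intvec_def)

lemma finite_ibox: "finite {z::int^'n::finite. \<forall>j. \<bar>z$j - c$j\<bar> \<le> k}"
proof (rule finite_subset)
  show "{z::int^'n. \<forall>j. \<bar>z$j - c$j\<bar> \<le> k} \<subseteq> (\<lambda>f. \<chi> i. f i) ` (PiE UNIV (\<lambda>i. {c$i-k..c$i+k}))"
  proof
    fix z :: "int^'n" assume z: "z \<in> {z. \<forall>j. \<bar>z$j - c$j\<bar> \<le> k}"
    have "(\<lambda>i. z$i) \<in> PiE UNIV (\<lambda>i. {c$i-k..c$i+k})"
      using z by (auto simp: abs_le_iff) (smt (verit, best))+
    then show "z \<in> (\<lambda>f. \<chi> i. f i) ` (PiE UNIV (\<lambda>i. {c$i-k..c$i+k}))"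
      by (rule rev_image_eqI) simp
  qed
  show "finite ((\<lambda>f. \<chi> i. f i) ` (PiE UNIV (\<lambda>i. {c$i-k..c$i+k})))"
    by (intro finite_imageI finite_PiE) auto
qed

lemma kuhn_chain:
  assumes "x \<in> kuhn_simplex \<sigma>" "i \<le> j" "j < CARD('n::finite)"
  shows "x $ (\<sigma> j) \<le> (x::real^'n) $ (\<sigma> i)"
  using assms(2,3)
proof (induction j)
  case 0 then show ?case by simp
next
  case (Suc j)
  show ?case
  proof (cases "i = Suc j")
    case False
    then have "x $ (\<sigma> j) \<le> x $ (\<sigma> i)" using Suc by simp
    moreover have "x $ (\<sigma> (Suc j)) \<le> x $ (\<sigma> j)"
      using assms(1) Suc.prems by (simp add: kuhn_simplex_def)
    ultimately show ?thesis by simp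
  qed simp
qed

lemma kuhn_simplex_unit:
  assumes "bij_betw \<sigma> {..<CARD('n::finite)} (UNIV :: 'n set)" "x \<in> kuhn_simplex \<sigma>"
  shows "0 \<le> (x::real^'n) $ j \<and> x $ j \<le> 1"
proof -
  obtain k where k: "k < CARD('n)" "j = \<sigma> k"
    using assms(1) unfolding bij_betw_def by auto
  have d: "CARD('n) - 1 < CARD('n)" by simp
  have "x $ (\<sigma> (CARD('n) - 1)) \<le> x $ (\<sigma> k)"
    by (rule kuhn_chain[OF assms(2)]) (use k in auto)
  moreover have "x $ (\<sigma> k) \<le> x $ (\<sigma> 0)"
    by (rule kuhn_chain[OF assms(2)]) (use k in auto)
  ultimately show ?thesis using assms(2) k by (auto simp: kuhn_simplex_def)
qed

lemma tile_coords:
  assumes "T \<in> kuhn_tiles"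
  obtains z :: "int^'n::finite" where
    "\<And>x j. x \<in> T \<Longrightarrow> real_of_int (z$j) \<le> x$j \<and> x$j \<le> real_of_int (z$j) + 1"
proof -
  from assms obtain z \<sigma> where T: "T = (\<lambda>x. of_intvec z + x) ` kuhn_simplex \<sigma>"
    and b: "bij_betw \<sigma> {..<CARD('n)} (UNIV :: 'n set)"
    by (auto simp: kuhn_tiles_def)
  show ?thesis
    apply (rule that[of z])
    using kuhn_simplex_unit[OF b] unfolding T by fastforce
qed

lemma sort_perm:
  fixes f :: "'n::finite \<Rightarrow> real"
  shows "\<exists>\<sigma>. bij_betw \<sigma> {..<CARD('n)} (UNIV :: 'n set) \<and>
     (\<forall>i. Suc i < CARD('n) \<longrightarrow> f (\<sigma> (Suc i)) \<le> f (\<sigma> i))"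
proof -
  obtain h where h: "bij_betw h {0..<CARD('n)} (UNIV :: 'n set)"
    using ex_bij_betw_nat_finite[of "UNIV :: 'n set"] by auto
  define L where "L = map h [0..<CARD('n)]"
  have dL: "distinct L" using h unfolding L_def bij_betw_def
    by (simp add: distinct_map)
  have sL: "set L = UNIV" using h unfolding L_def bij_betw_def by simp
  define L' where "L' = sort_key (\<lambda>i. - f i) L"
  have dL': "distinct L'" using dL by (simp add: L'_def)
  have sL': "set L' = UNIV" using sL by (simp add: L'_def)
  have lL': "length L' = CARD('n)" by (simp add: L'_def L_def)
  have so: "sorted (map (\<lambda>i. - f i) L')" unfolding L'_def by (rule sorted_sort_key)
  have "bij_betw ((!) L') {..<CARD('n)} (UNIV :: 'n set)"
    by (rule bij_betw_nth) (use dL' sL' lL' in auto)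
  moreover have "f (L' ! (Suc i)) \<le> f (L' ! i)" if "Suc i < CARD('n)" for i
  proof -
    have "(map (\<lambda>i. - f i) L') ! i \<le> (map (\<lambda>i. - f i) L') ! (Suc i)"
      using so that lL' by (intro sorted_nth_mono) auto
    then show ?thesis using that lL' by simp
  qed
  ultimately show ?thesis by blast
qed

lemma tile_translate_mem:
  assumes "bij_betw \<sigma> {..<CARD('n::finite)} (UNIV :: 'n set)"
  shows "(\<lambda>x. of_intvec z + x) ` kuhn_simplex \<sigma> \<in> kuhn_tiles_at (z :: int^'n)"
proof -
  have "(0::real^'n) \<in> kuhn_simplex \<sigma>" by (simp add: kuhn_simplex_def)
  then have "of_intvec z \<in> (\<lambda>x. of_intvec z + x) ` kuhn_simplex \<sigma>"
    by (rule rev_image_eqI) simp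
  then show ?thesis using assms unfolding kuhn_tiles_at_def kuhn_tiles_def by blast
qed

lemma box_sub_zeta:
  assumes "p \<in> X"
  shows "box (of_intvec p) (of_intvec p + 1) \<subseteq> zeta (X :: (int^'n::finite) set)"
proof
  fix x :: "real^'n" assume x: "x \<in> box (of_intvec p) (of_intvec p + 1)"
  define y where "y = x - of_intvec p"
  have y: "0 < y$j \<and> y$j < 1" for j using x unfolding mem_box_cart by (auto simp: y_def) (smt (verit, best))+
  obtain \<sigma> where b: "bij_betw \<sigma> {..<CARD('n)} (UNIV :: 'n set)"
    and m: "\<And>i. Suc i < CARD('n) \<Longrightarrow> y $ (\<sigma> (Suc i)) \<le> y $ (\<sigma> i)"
    using sort_perm[of "\<lambda>j. y $ j"] by blast
  have "y \<in> kuhn_simplex \<sigma>" using y m by (auto simp: kuhn_simplex_def less_imp_le)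
  then have "x \<in> (\<lambda>x. of_intvec p + x) ` kuhn_simplex \<sigma>"
    by (rule rev_image_eqI) (simp add: y_def)
  then show "x \<in> zeta X" using tile_translate_mem[OF b, of p] assms
    unfolding zeta_def by blast
qed

lemma measure_unit_box:
  "measure lebesgue (box (a::real^'n::finite) (a + 1)) = 1"
proof -
  have b: "(1::real^'n) \<bullet> b = 1" if "b \<in> Basis" for b
    using that by (auto simp: Basis_vec_def inner_axis)
  have "measure lebesgue (box a (a + 1)) = measure lborel (box a (a + 1))"
    by simp
  also have "\<dots> = prod ((\<bullet>) (a + 1 - a)) Basis"
    by (rule measure_lborel_box) (simp add: inner_add_left b)
  also have "\<dots> = 1" by (simp add: b prod.neutral)
  finally show ?thesis .
qed

lemma kuhn_simplex_restrict:
  fixes \<sigma> :: "nat \<Rightarrow> 'n::finite"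
  shows "kuhn_simplex \<sigma> = kuhn_simplex (restrict \<sigma> {..<CARD('n)})"
proof -
  have "CARD('n) - 1 < CARD('n)" by simp
  then show ?thesis unfolding kuhn_simplex_def by (auto simp: restrict_def)
qed

lemma closed_kuhn_simplex: "closed (kuhn_simplex \<sigma> :: (real^'n::finite) set)"
  unfolding kuhn_simplex_def
  by (intro closed_Collect_conj closed_Collect_all closed_Collect_imp closed_Collect_le
        open_Collect_const continuous_intros)

lemma tiles_at_finite: "finite (kuhn_tiles_at (i :: int^'n::finite))"
proof -
  let ?Z = "{z::int^'n. \<forall>j. \<bar>z$j - i$j\<bar> \<le> 1}"
  let ?S = "PiE {..<CARD('n)} (\<lambda>_. UNIV :: 'n set)"
  have "kuhn_tiles_at i \<subseteq> (\<lambda>(z,\<sigma>). (\<lambda>x. of_intvec z + x) ` kuhn_simplex \<sigma>) ` (?Z \<times> ?S)"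
  proof
    fix T assume T: "T \<in> kuhn_tiles_at i"
    then obtain z \<sigma> where Td: "T = (\<lambda>x. of_intvec z + x) ` kuhn_simplex \<sigma>"
      and b: "bij_betw \<sigma> {..<CARD('n)} (UNIV :: 'n set)"
      by (auto simp: kuhn_tiles_at_def kuhn_tiles_def)
    have iT: "of_intvec i \<in> T" using T by (simp add: kuhn_tiles_at_def)
    have "z \<in> ?Z"
    proof (simp only: mem_Collect_eq, intro allI)
      fix j
      obtain y where y: "y \<in> kuhn_simplex \<sigma>" "of_intvec i = of_intvec z + y"
        using iT Td by auto
      have "0 \<le> y$j \<and> y$j \<le> 1" using kuhn_simplex_unit[OF b y(1)] .
      moreover have "real_of_int (i$j) = real_of_int (z$j) + y$j"
        using arg_cong[OF y(2), of "\<lambda>v. v$j"] by simp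
      ultimately show "\<bar>z$j - i$j\<bar> \<le> 1" by linarith
    qed
    moreover have "restrict \<sigma> {..<CARD('n)} \<in> ?S" by simp
    ultimately show "T \<in> (\<lambda>(z,\<sigma>). (\<lambda>x. of_intvec z + x) ` kuhn_simplex \<sigma>) ` (?Z \<times> ?S)"
      unfolding Td by (intro rev_image_eqI[of "(z, restrict \<sigma> {..<CARD('n)})"])
        (auto simp flip: kuhn_simplex_restrict)
  qed
  moreover have "finite (?Z \<times> ?S)"
    using finite_ibox[of i 1] by (intro finite_cartesian_product finite_PiE) auto
  ultimately show ?thesis by (meson finite_imageI finite_subset)
qed

lemma compact_zeta: "finite X \<Longrightarrow> compact (zeta (X :: (int^'n::finite) set))"
  unfolding zeta_def
proof (intro compact_UN compact_Union tiles_at_finite)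
  fix T i assume "T \<in> kuhn_tiles_at (i::int^'n)"
  then obtain z \<sigma> where Td: "T = (\<lambda>x. of_intvec z + x) ` kuhn_simplex \<sigma>"
    and b: "bij_betw \<sigma> {..<CARD('n)} (UNIV :: 'n set)"
    by (auto simp: kuhn_tiles_at_def kuhn_tiles_def)
  have "closed T" unfolding Td using closed_translation[OF closed_kuhn_simplex] by simp
  moreover have "bounded T"
  proof -
    have "kuhn_simplex \<sigma> \<subseteq> cbox 0 1"
      using kuhn_simplex_unit[OF b] by (auto simp: mem_box_cart)
    then have "bounded (kuhn_simplex \<sigma>)" using bounded_cbox bounded_subset by blast
    then show ?thesis unfolding Td using bounded_translation by blast
  qed
  ultimately show "compact T" by (simp add: compact_eq_bounded_closed)
qed

lemma norm_axis_gen: "norm (axis i (a::real) :: real^'n::finite) = \<bar>a\<bar>"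
proof -
  have "axis i a = a *\<^sub>R (axis i 1 :: real^'n)" by (simp add: vec_eq_iff axis_def)
  then show ?thesis by (simp add: norm_axis_1)
qed

lemma boundary_point:
  fixes Y :: "(int^'n::finite) set"
  assumes "p \<notin> Y" "y \<in> Y" "\<forall>j. \<bar>y$j - p$j\<bar> \<le> 1"
  shows "\<exists>q\<in>Y. 1 \<le> lattice_val Y q \<and> (\<forall>j. \<bar>q$j - p$j\<bar> \<le> 1)"
proof -
  define P where "P y \<longleftrightarrow> y \<in> Y \<and> (\<forall>j. \<bar>y$j - p$j\<bar> \<le> 1)" for y
  define L where "L y = (\<Sum>j\<in>UNIV. nat \<bar>y$j - p$j\<bar>)" for y :: "int^'n"
  obtain q where q: "P q" "\<And>y. P y \<Longrightarrow> L q \<le> L y"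
    using ex_has_least_nat[of P y L] assms by (auto simp: P_def)
  have "q \<noteq> p" using q(1) assms(1) by (auto simp: P_def)
  then obtain i where i: "q$i \<noteq> p$i" by (auto simp: vec_eq_iff)
  have qi: "\<bar>q$i - p$i\<bar> = 1" using q(1) i unfolding P_def by (smt (verit))
  define r where "r = (\<chi> j. if j = i then p$j else q$j)"
  have "L r < L q" unfolding L_def
    by (rule sum_strict_mono_ex1) (use i in \<open>auto simp: r_def\<close>)
  then have rY: "r \<notin> Y"
  proof (intro notI)
    assume "L r < L q" "r \<in> Y"
    then have "P r" using q(1) by (auto simp: P_def r_def)
    then show False using q(2) \<open>L r < L q\<close> by fastforce
  qed
  have eq: "of_intvec q - of_intvec r = (axis i (real_of_int (q$i - p$i)) :: real^'n)"
    by (simp add: vec_eq_iff axis_def r_def)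
  have nr: "norm (of_intvec q - of_intvec r) = (1::real)"
    unfolding eq norm_axis_gen using qi by linarith
  let ?S = "{r. r \<notin> Y \<and> norm (of_intvec q - of_intvec r) = (1::real)}"
  have "?S \<subseteq> {r::int^'n. \<forall>j. \<bar>r$j - q$j\<bar> \<le> 1}"
  proof (clarify)
    fix r' :: "int^'n" and j assume "norm (of_intvec q - of_intvec r') = (1::real)"
    then have "\<bar>(of_intvec q - of_intvec r') $ j\<bar> \<le> (1::real)"
      using component_le_norm_cart by metis
    then show "\<bar>r'$j - q$j\<bar> \<le> 1" by simp
  qed
  then have "finite ?S" using finite_ibox[of q 1] finite_subset by blast
  moreover have "r \<in> ?S" using rY nr by simp
  ultimately have "1 \<le> card ?S" by (metis One_nat_def Suc_leI card_gt_0_iff empty_iff)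
  then show ?thesis using q(1) unfolding P_def lattice_val_def by blast
qed

lemma one_side:
  fixes X Y :: "(int^'n::finite) set"
  assumes X: "finite X" and Y: "finite Y"
  shows "real (card (X - Y)) \<le> measure lebesgue (zeta X - zeta Y)
     + real (card {z::int^'n. \<forall>j. \<bar>z$j\<bar> \<le> 1}) * real (lattice_perimeter Y)"
proof -
  define K where "K = {z::int^'n. \<forall>j. \<bar>z$j\<bar> \<le> 1}"
  have fK: "finite K" using finite_ibox[of 0 1] by (simp add: K_def)
  define D where "D = X - Y"
  define Bad where "Bad = {p\<in>D. \<exists>y\<in>Y. \<forall>j. \<bar>y$j - p$j\<bar> \<le> 1}"
  define G where "G = D - Bad"
  have fD: "finite D" using X by (simp add: D_def)
  have fG: "finite G" "finite Bad" using fD by (auto simp: G_def Bad_def)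
  have cD: "card D = card G + card Bad"
  proof -
    have "D = G \<union> Bad" "G \<inter> Bad = {}" by (auto simp: G_def Bad_def)
    then show ?thesis using fG card_Un_disjoint by metis
  qed
  define A where "A p = box (of_intvec p) (of_intvec p + (1::real^'n))" for p :: "int^'n"
  have Aleb: "A p \<in> lmeasurable" for p by (simp add: A_def lmeasurable_box)
  have disj: "disjoint_family_on A G"
    unfolding disjoint_family_on_def
  proof (intro ballI impI)
    fix p q :: "int^'n" assume "p \<noteq> q"
    then obtain j where j: "p$j \<noteq> q$j" by (auto simp: vec_eq_iff)
    show "A p \<inter> A q = {}"
    proof (rule ccontr)
      assume "A p \<inter> A q \<noteq> {}"
      then obtain x where "x \<in> A p" "x \<in> A q" by blast
      then have "real_of_int (p$j) < x$j" "x$j < real_of_int (p$j) + 1"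
        "real_of_int (q$j) < x$j" "x$j < real_of_int (q$j) + 1"
        by (auto simp: A_def mem_box_cart)
      then have "\<bar>p$j - q$j\<bar> < 1" by linarith
      then show False using j by linarith
    qed
  qed
  have Afin: "emeasure lebesgue (A p) \<noteq> \<infinity>" for p
  proof -
    have "emeasure lebesgue (A p) < \<infinity>" using Aleb[of p] unfolding fmeasurable_def by blast
    then show ?thesis by simp
  qed
  have mU: "measure lebesgue (\<Union>p\<in>G. A p) = real (card G)"
  proof -
    have "measure lebesgue (\<Union>p\<in>G. A p) = (\<Sum>p\<in>G. measure lebesgue (A p))"
      by (rule measure_finite_Union[OF fG(1) _ disj])
        (use Aleb Afin fmeasurableD in auto)
    also have "\<dots> = real (card G)" by (simp add: A_def measure_unit_box)
    finally show ?thesis .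
  qed
  have sub: "(\<Union>p\<in>G. A p) \<subseteq> zeta X - zeta Y"
  proof
    fix x assume "x \<in> (\<Union>p\<in>G. A p)"
    then obtain p where p: "p \<in> G" "x \<in> A p" by blast
    have "x \<in> zeta X" using box_sub_zeta[of p X] p by (auto simp: A_def G_def D_def)
    moreover have "x \<notin> zeta Y"
    proof
      assume "x \<in> zeta Y"
      then obtain y T where y: "y \<in> Y" "T \<in> kuhn_tiles_at y" "x \<in> T"
        by (auto simp: zeta_def)
      then have T: "T \<in> kuhn_tiles" "of_intvec y \<in> T" by (auto simp: kuhn_tiles_at_def)
      obtain z :: "int^'n" where z: "\<And>x j. x \<in> T \<Longrightarrow>
          real_of_int (z$j) \<le> x$j \<and> x$j \<le> real_of_int (z$j) + 1"
        using tile_coords[OF T(1)] by blast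
      have "\<forall>j. \<bar>y$j - p$j\<bar> \<le> 1"
      proof
        fix j
        have "real_of_int (z$j) \<le> x$j \<and> x$j \<le> real_of_int (z$j) + 1" using z y(3) by blast
        moreover have "real_of_int (z$j) \<le> real_of_int (y$j) \<and> real_of_int (y$j) \<le> real_of_int (z$j) + 1"
          using z[OF T(2), of j] by simp
        moreover have "real_of_int (p$j) < x$j \<and> x$j < real_of_int (p$j) + 1"
          using p(2) by (auto simp: A_def mem_box_cart)
        ultimately have "\<bar>y$j - p$j\<bar> < 2" by linarith
        then show "\<bar>y$j - p$j\<bar> \<le> 1" by linarith
      qed
      then show False using p(1) y(1) by (auto simp: G_def Bad_def)
    qed
    ultimately show "x \<in> zeta X - zeta Y" by blast
  qed
  have fm: "zeta X - zeta Y \<in> lmeasurable"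
    using fmeasurable_Diff[OF lmeasurable_compact[OF compact_zeta[OF X]]
        fmeasurableD[OF lmeasurable_compact[OF compact_zeta[OF Y]]]] .
  have cG: "real (card G) \<le> measure lebesgue (zeta X - zeta Y)"
    unfolding mU[symmetric]
    by (rule measure_mono_fmeasurable[OF sub _ fm])
      (use Aleb fG(1) in \<open>auto intro!: sets.finite_UN\<close>)
  define Y' where "Y' = {q\<in>Y. 1 \<le> lattice_val Y q}"
  have fY': "finite Y'" using Y by (simp add: Y'_def)
  have "Bad \<subseteq> (\<Union>q\<in>Y'. (\<lambda>v. q + v) ` K)"
  proof
    fix p assume "p \<in> Bad"
    then obtain y where "p \<notin> Y" "y \<in> Y" "\<forall>j. \<bar>y$j - p$j\<bar> \<le> 1"
      by (auto simp: Bad_def D_def)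
    then obtain q where q: "q \<in> Y" "1 \<le> lattice_val Y q" "\<forall>j. \<bar>q$j - p$j\<bar> \<le> 1"
      using boundary_point by blast
    have "p - q \<in> K" using q(3) by (auto simp: K_def abs_minus_commute)
    then have "p \<in> (\<lambda>v. q + v) ` K" by (rule rev_image_eqI) simp
    then show "p \<in> (\<Union>q\<in>Y'. (\<lambda>v. q + v) ` K)" using q by (auto simp: Y'_def)
  qed
  then have "card Bad \<le> card (\<Union>q\<in>Y'. (\<lambda>v. q + v) ` K)"
    by (intro card_mono) (use fY' fK in auto)
  also have "\<dots> \<le> (\<Sum>q\<in>Y'. card ((\<lambda>v. q + v) ` K))" by (rule card_UN_le[OF fY'])
  also have "\<dots> \<le> (\<Sum>q\<in>Y'. card K)" by (intro sum_mono card_image_le fK)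
  also have "\<dots> = card K * card Y'" by simp
  also have "\<dots> \<le> card K * lattice_perimeter Y"
  proof -
    have "card Y' = (\<Sum>q\<in>Y'. 1)" by simp
    also have "\<dots> \<le> (\<Sum>q\<in>Y'. lattice_val Y q)" by (intro sum_mono) (auto simp: Y'_def)
    also have "\<dots> \<le> (\<Sum>q\<in>Y. lattice_val Y q)" by (intro sum_mono2 Y) (auto simp: Y'_def)
    finally show ?thesis by (simp add: lattice_perimeter_def)
  qed
  finally have cB: "real (card Bad) \<le> real (card K) * real (lattice_perimeter Y)"
    by (metis of_nat_le_iff of_nat_mult)
  show ?thesis using cD cG cB unfolding D_def K_def by simp
qed

theorem mainTheorem13:
  assumes "CARD('n::finite) \<ge> 2"
  shows "\<exists>C>0. \<forall>X Y :: (int^'n) set. finite X \<longrightarrow> finite Y \<longrightarrow>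
     real (card (X - Y)) \<le> measure lebesgue (zeta X - zeta Y) + C * real (lattice_perimeter Y)
     \<and> real (card ((X - Y) \<union> (Y - X)))
         \<le> measure lebesgue ((zeta X - zeta Y) \<union> (zeta Y - zeta X))
           + C * (real (lattice_perimeter X) + real (lattice_perimeter Y))"
proof -
  define k where "k = real (card {z::int^'n. \<forall>j. \<bar>z$j\<bar> \<le> 1})"
  have k0: "0 \<le> k" by (simp add: k_def)
  show ?thesis
  proof (intro exI[of _ "k + 1"] conjI allI impI)
    show "0 < k + 1" using k0 by simp
    fix X Y :: "(int^'n) set" assume X: "finite X" and Y: "finite Y"
    have h1: "real (card (X - Y)) \<le> measure lebesgue (zeta X - zeta Y) + k * real (lattice_perimeter Y)"
      using one_side[OF X Y] by (simp add: k_def)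
    have h2: "real (card (Y - X)) \<le> measure lebesgue (zeta Y - zeta X) + k * real (lattice_perimeter X)"
      using one_side[OF Y X] by (simp add: k_def)
    have m1: "k * real (lattice_perimeter Y) \<le> (k + 1) * real (lattice_perimeter Y)"
      by (simp add: mult_right_mono)
    have m2: "k * real (lattice_perimeter X) \<le> (k + 1) * real (lattice_perimeter X)"
      by (simp add: mult_right_mono)
    show "real (card (X - Y)) \<le> measure lebesgue (zeta X - zeta Y) + (k + 1) * real (lattice_perimeter Y)"
      using h1 m1 by linarith
    have c: "card ((X - Y) \<union> (Y - X)) = card (X - Y) + card (Y - X)"
      by (rule card_Un_disjoint) (use X Y in auto)
    have fX: "zeta X \<in> lmeasurable" "zeta Y \<in> lmeasurable"
      using lmeasurable_compact compact_zeta X Y by blast+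
    have f1: "zeta X - zeta Y \<in> lmeasurable" "zeta Y - zeta X \<in> lmeasurable"
      using fmeasurable_Diff fX fmeasurableD by blast+
    have "measure lebesgue ((zeta X - zeta Y) \<union> (zeta Y - zeta X))
        = measure lebesgue (zeta X - zeta Y) + measure lebesgue ((zeta Y - zeta X) - (zeta X - zeta Y))"
      by (rule measure_Un2[OF f1])
    also have "(zeta Y - zeta X) - (zeta X - zeta Y) = zeta Y - zeta X" by blast
    finally have mu: "measure lebesgue ((zeta X - zeta Y) \<union> (zeta Y - zeta X))
        = measure lebesgue (zeta X - zeta Y) + measure lebesgue (zeta Y - zeta X)" .
    show "real (card ((X - Y) \<union> (Y - X)))
         \<le> measure lebesgue ((zeta X - zeta Y) \<union> (zeta Y - zeta X))
           + (k + 1) * (real (lattice_perimeter X) + real (lattice_perimeter Y))"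
      unfolding c mu using h1 h2 m1 m2 by (simp add: distrib_left)
  qed
qed

end
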